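(* Let $1\le i\le b$, let $n$ be a positive integer and $m,k$ non-negative integers. Then (1) $d_i(n+p-1)\ge q\,d_i(n)$; (2) $y_i(m+p-1,k)\ge q\,y_i(m,k)$; (3) $y_i(m+p-1)>q\,y_i(m)$.
   Context: Let $q=p^b$ with $p$ prime, $b\ge1$. Let $y\in\mathbb{Z}_p$ be written $y=\sum_{i=1}^b p^{i-1}y_i$ with $y_i=\sum_{j\ge0}y_{i,j}q^j$, $0\le y_{i,j}<p$. Assume $y$ is $q$-full: no $y_i$ is a non-negative integer (so $\sum_j y_{i,j}=\infty$). For $n\ge1$, $d_i(n)=p^{i-1}q^w$ where $w\ge0$ is the unique integer with $\sum_{j=0}^{w-1}y_{i,j}<n\le\sum_{j=0}^{w}y_{i,j}$. For $m\in\mathbb{Z}$, $y_i(m)=\sum_{n=1}^m d_i(n)$ (zero if $m\le0$), and $y_i(m,k)=y_i(m+k)-y_i(m)$. *)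

theory Defs
  imports Main "HOL-Computational_Algebra.Primes"
begin

text \<open>A p-adic integer y is represented by its base-p digit sequence c,
  y = sum_k c k * p^k with 0 <= c k < p. With q = p^b, the digit y_{i,j}
  (1 <= i <= b) is c (i - 1 + b*j), since y = sum_i p^(i-1) sum_j y_{i,j} q^j.\<close>

definition ydig :: "(nat \<Rightarrow> nat) \<Rightarrow> nat \<Rightarrow> nat \<Rightarrow> nat \<Rightarrow> nat" where
  "ydig c b i j = c (i - 1 + b * j)"

text \<open>q-full: no y_i is a non-negative integer, i.e. each y_i has infinitely many nonzero digits.\<close>
definition q_full :: "(nat \<Rightarrow> nat) \<Rightarrow> nat \<Rightarrow> bool" where
  "q_full c b \<longleftrightarrow> (\<forall>i\<in>{1..b}. infinite {j. ydig c b i j \<noteq> 0})"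

definition dfun :: "nat \<Rightarrow> nat \<Rightarrow> (nat \<Rightarrow> nat) \<Rightarrow> nat \<Rightarrow> nat \<Rightarrow> nat" where
  "dfun p b c i n = p ^ (i - 1) * (p ^ b) ^
     (THE w. (\<Sum>j<w. ydig c b i j) < n \<and> n \<le> (\<Sum>j\<le>w. ydig c b i j))"

definition yfun :: "nat \<Rightarrow> nat \<Rightarrow> (nat \<Rightarrow> nat) \<Rightarrow> nat \<Rightarrow> int \<Rightarrow> int" where
  "yfun p b c i m = (\<Sum>n\<in>{1..m}. int (dfun p b c i (nat n)))"

definition yfun2 :: "nat \<Rightarrow> nat \<Rightarrow> (nat \<Rightarrow> nat) \<Rightarrow> nat \<Rightarrow> int \<Rightarrow> int \<Rightarrow> int" where
  "yfun2 p b c i m k = yfun p b c i (m + k) - yfun p b c i m"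

end

theory Submission
  imports Defs
begin

lemma T_mono:
  fixes f :: "nat \<Rightarrow> nat"
  assumes "a \<le> b" shows "(\<Sum>j<a. f j) \<le> (\<Sum>j<b. f j)"
  by (rule sum_mono2) (use assms in auto)

lemma T_unbounded:
  fixes f :: "nat \<Rightarrow> nat"
  assumes "infinite {j. f j \<noteq> 0}"
  shows "\<exists>w. N \<le> (\<Sum>j<w. f j)"
proof (induction N)
  case 0 then show ?case by auto
next
  case (Suc N)
  then obtain w where w: "N \<le> (\<Sum>j<w. f j)" by auto
  have "\<exists>j. j \<ge> w \<and> f j \<noteq> 0"
  proof (rule ccontr)
    assume "\<not> ?thesis"
    then have "{j. f j \<noteq> 0} \<subseteq> {..<w}" using not_le by blast
    then show False using assms finite_subset by blast
  qed
  then obtain j where j: "j \<ge> w" "f j \<noteq> 0" by blast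
  have "(\<Sum>j\<in>insert j {..<w}. f j) \<le> (\<Sum>j<Suc j. f j)"
    by (rule sum_mono2) (use j in auto)
  moreover have "(\<Sum>j\<in>insert j {..<w}. f j) = f j + (\<Sum>j<w. f j)"
    using j by (subst sum.insert) auto
  ultimately show ?case using w j by (intro exI[of _ "Suc j"]) auto
qed

lemma the_char:
  fixes f :: "nat \<Rightarrow> nat" and n :: nat
  assumes "infinite {j. f j \<noteq> 0}" and "n \<ge> 1"
  defines "W \<equiv> (THE w. (\<Sum>j<w. f j) < n \<and> n \<le> (\<Sum>j\<le>w. f j))"
  shows "(\<Sum>j<W. f j) < n \<and> n \<le> (\<Sum>j<Suc W. f j)"
proof -
  have lt: "{..w} = {..<Suc w}" for w :: nat by auto
  define P where "P w \<longleftrightarrow> (\<Sum>j<w. f j) < n \<and> n \<le> (\<Sum>j<Suc w. f j)" for w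
  have ex: "\<exists>w. n \<le> (\<Sum>j<Suc w. f j)"
  proof -
    obtain w where "n \<le> (\<Sum>j<w. f j)" using T_unbounded[OF assms(1)] by blast
    moreover have "(\<Sum>j<w. f j) \<le> (\<Sum>j<Suc w. f j)" by (rule T_mono) auto
    ultimately show ?thesis by (meson le_trans)
  qed
  define V where "V = (LEAST w. n \<le> (\<Sum>j<Suc w. f j))"
  have V1: "n \<le> (\<Sum>j<Suc V. f j)" unfolding V_def using ex by (rule LeastI_ex)
  have V2: "(\<Sum>j<V. f j) < n"
  proof (cases V)
    case 0 then show ?thesis using assms by simp
  next
    case (Suc v)
    then have "v < V" by simp
    then have "\<not> n \<le> (\<Sum>j<Suc v. f j)" unfolding V_def by (rule not_less_Least)
    then show ?thesis using Suc by simp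
  qed
  have uniq: "w1 = w2" if "P w1" "P w2" for w1 w2
  proof (rule ccontr)
    assume "w1 \<noteq> w2"
    then consider "w1 < w2" | "w2 < w1" by linarith
    then show False
    proof cases
      case 1
      then have "(\<Sum>j<Suc w1. f j) \<le> (\<Sum>j<w2. f j)" by (intro T_mono) auto
      then show False using that unfolding P_def by linarith
    next
      case 2
      then have "(\<Sum>j<Suc w2. f j) \<le> (\<Sum>j<w1. f j)" by (intro T_mono) auto
      then show False using that unfolding P_def by linarith
    qed
  qed
  have "P V" unfolding P_def using V1 V2 by simp
  have "W = V" unfolding W_def lt P_def[symmetric]
    by (rule the_equality) (use uniq \<open>P V\<close> in blast)+
  with \<open>P V\<close> have "P W" by simp
  then show ?thesis unfolding P_def .
qed

lemma part1:
  fixes p b i n :: nat and c :: "nat \<Rightarrow> nat"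
  assumes "p \<ge> 2" and "\<forall>t. c t < p" and "q_full c b"
    and "1 \<le> i" and "i \<le> b" and "n \<ge> 1"
  shows "dfun p b c i (n + p - 1) \<ge> p ^ b * dfun p b c i n"
proof -
  define f where "f j = ydig c b i j" for j
  have inf: "infinite {j. f j \<noteq> 0}" using assms unfolding q_full_def f_def by auto
  have fl: "f j < p" for j using assms unfolding f_def ydig_def by auto
  define W where "W m = (THE w. (\<Sum>j<w. f j) < m \<and> m \<le> (\<Sum>j\<le>w. f j))" for m
  have d: "dfun p b c i m = p ^ (i - 1) * (p ^ b) ^ W m" for m
    unfolding dfun_def W_def f_def ..
  have c1: "(\<Sum>j<W n. f j) < n \<and> n \<le> (\<Sum>j<Suc (W n). f j)"
    unfolding W_def using the_char[OF inf assms(6)] .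
  have c2: "(\<Sum>j<W (n+p-1). f j) < n+p-1 \<and> n+p-1 \<le> (\<Sum>j<Suc (W (n+p-1)). f j)"
    unfolding W_def using the_char[OF inf, of "n+p-1"] assms by auto
  have "Suc (W n) \<le> W (n+p-1)"
  proof (rule ccontr)
    assume "\<not> ?thesis"
    then have "(\<Sum>j<Suc (W (n+p-1)). f j) \<le> (\<Sum>j<Suc (W n). f j)" by (intro T_mono) auto
    moreover have "(\<Sum>j<Suc (W n). f j) = (\<Sum>j<W n. f j) + f (W n)" by simp
    moreover note fl[of "W n"]
    ultimately show False using c1 c2 by linarith
  qed
  then have "(p^b)^(Suc (W n)) \<le> (p^b)^(W (n+p-1))"
    by (rule power_increasing) (use assms in simp)
  then show ?thesis unfolding d by (simp add: mult.left_commute)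
qed

lemma yfun_step:
  assumes "m \<ge> 0"
  shows "yfun p b c i (m + 1) = yfun p b c i m + int (dfun p b c i (nat (m + 1)))"
proof -
  have "{1..m+1} = insert (m+1) {1..m}" using assms by auto
  then show ?thesis unfolding yfun_def by (simp add: add.commute)
qed

lemma yfun2_step:
  assumes "m \<ge> 0"
  shows "yfun2 p b c i m (int k + 1) = yfun2 p b c i m (int k) + int (dfun p b c i (nat (m + int k + 1)))"
  unfolding yfun2_def using yfun_step[of "m + int k" p b c i] assms by (simp add: add.assoc)

lemma part2:
  fixes p b i :: nat and c :: "nat \<Rightarrow> nat" and m :: int
  assumes "p \<ge> 2" and "\<forall>t. c t < p" and "q_full c b"
    and "1 \<le> i" and "i \<le> b" and "m \<ge> 0"
  shows "yfun2 p b c i (m + int p - 1) (int k) \<ge> int (p^b) * yfun2 p b c i m (int k)"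
proof (induction k)
  case 0 then show ?case by (simp add: yfun2_def)
next
  case (Suc k)
  define n where "n = nat (m + int k + 1)"
  have n1: "n \<ge> 1" using assms unfolding n_def by auto
  have e: "nat (m + int p - 1 + int k + 1) = n + p - 1" unfolding n_def using assms by auto
  have "dfun p b c i (n + p - 1) \<ge> p ^ b * dfun p b c i n"
    using part1[OF assms(1-5) n1] .
  then have "int (dfun p b c i (n + p - 1)) \<ge> int (p ^ b) * int (dfun p b c i n)"
    by (metis of_nat_le_iff of_nat_mult)
  then show ?case
    using Suc.IH yfun2_step[of m p b c i k] yfun2_step[of "m + int p - 1" p b c i k] assms
    unfolding e n_def[symmetric] by (simp add: algebra_simps)
qed

theorem lemma6p5:
  fixes p b q i n :: nat and c :: "nat \<Rightarrow> nat" and m k :: int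
  assumes "prime p" and "b \<ge> 1" and "q = p ^ b"
    and "\<forall>t. c t < p"
    and "q_full c b"
    and "1 \<le> i" and "i \<le> b"
    and "n \<ge> 1" and "m \<ge> 0" and "k \<ge> 0"
  shows "dfun p b c i (n + p - 1) \<ge> q * dfun p b c i n
     \<and> yfun2 p b c i (m + int p - 1) k \<ge> int q * yfun2 p b c i m k
     \<and> yfun p b c i (m + int p - 1) > int q * yfun p b c i m"
proof (intro conjI)
  have p2: "p \<ge> 2" using assms(1) prime_ge_2_nat by blast
  show "dfun p b c i (n + p - 1) \<ge> q * dfun p b c i n"
    using part1[OF p2 assms(4-8)] assms(3) by simp
  obtain k' where k': "k = int k'" using assms(10) nonneg_eq_int by blast
  show "yfun2 p b c i (m + int p - 1) k \<ge> int q * yfun2 p b c i m k"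
    using part2[OF p2 assms(4-7) assms(9)] assms(3) k' by simp
  obtain m' where m': "m = int m'" using assms(9) nonneg_eq_int by blast
  have A: "yfun2 p b c i (0 + int p - 1) m \<ge> int q * yfun2 p b c i 0 m"
    using part2[OF p2 assms(4-7), of 0 m'] assms(3) m' by simp
  have y0: "yfun p b c i 0 = 0" unfolding yfun_def by simp
  have pos: "yfun p b c i (int p - 1) > 0"
    unfolding yfun_def
  proof (rule sum_pos2[of _ 1])
    show "1 \<in> {1..int p - 1}" using p2 by auto
    have "dfun p b c i 1 > 0" unfolding dfun_def using p2 by simp
    then show "0 < int (dfun p b c i (nat 1))" by simp
  qed auto
  show "yfun p b c i (m + int p - 1) > int q * yfun p b c i m"
    using A pos y0 unfolding yfun2_def by (simp add: algebra_simps)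
qed

end
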